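(* Let $X$ be a nonnegative random variable with $X\in\mathcal{L}^{1/\theta}$ for some $0<\theta\le1$. Then (i) $\lim_{x\to\infty}e^{\varepsilon x^\theta}\mathbb{P}(X>x)=\infty$ for every $\varepsilon>0$; and (ii) $X\in\mathcal{L}^{1/\eta}$ for all $\eta$ with $1\le1/\eta<1/\theta$.
   Context: Class $\mathcal{L}$: nonnegative $Z$ with $\mathbb{P}(Z>x)>0$ for all $x\ge0$ and $\mathbb{P}(Z>x+y)/\mathbb{P}(Z>x)\to1$ as $x\to\infty$ for some (equivalently all) $y>0$. For $p\ge1$, $X\in\mathcal{L}^p$ means $X\ge0$ and $X^{1/p}\in\mathcal{L}$. *)

theory Defs
  imports "HOL-Probability.Probability"
begin

definition long_tailed :: "'a measure \<Rightarrow> ('a \<Rightarrow> real) \<Rightarrow> bool" where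
  "long_tailed M Z \<longleftrightarrow>
     (\<forall>\<omega>\<in>space M. 0 \<le> Z \<omega>) \<and>
     (\<forall>x::real. 0 \<le> x \<longrightarrow> measure M {\<omega>\<in>space M. Z \<omega> > x} > 0) \<and>
     (\<forall>y::real. 0 < y \<longrightarrow>
        ((\<lambda>x. measure M {\<omega>\<in>space M. Z \<omega> > x + y} / measure M {\<omega>\<in>space M. Z \<omega> > x})
           \<longlongrightarrow> 1) at_top)"

definition long_tailed_pow :: "'a measure \<Rightarrow> real \<Rightarrow> ('a \<Rightarrow> real) \<Rightarrow> bool" where
  "long_tailed_pow M p X \<longleftrightarrow>
     (\<forall>\<omega>\<in>space M. 0 \<le> X \<omega>) \<and> long_tailed M (\<lambda>\<omega>. X \<omega> powr (1 / p))"

end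

theory Submission imports Defs "HOL-Probability.Probability" "HOL-Real_Asymp.Real_Asymp" begin
lemma powr_ge_self: fixes a r :: real assumes "0 \<le> a" "a \<le> 1" "0 < r" "r \<le> 1" shows "a \<le> a powr r"
proof (cases "a = 0")
  case False
  then have "a powr 1 \<le> a powr r" using assms by (intro powr_mono') auto
  then show ?thesis using False assms by simp
qed simp
lemma powr_subadd: fixes x y r :: real assumes "0 \<le> x" "0 \<le> y" "0 < r" "r \<le> 1"
  shows "(x + y) powr r \<le> x powr r + y powr r"
proof (cases "x + y = 0")
  case True then show ?thesis using assms by simp
next
  case False
  define s where "s = x + y"
  have s: "s > 0" using False assms s_def by simp
  have "x / s \<le> (x/s) powr r" using assms s s_def by (intro powr_ge_self) auto
  moreover have "y / s \<le> (y/s) powr r" using assms s s_def by (intro powr_ge_self) auto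
  ultimately have "x / s + y / s \<le> (x/s) powr r + (y/s) powr r" by simp
  moreover have "x / s + y / s = 1" using s s_def by (simp add: add_divide_distrib[symmetric])
  ultimately have "1 \<le> (x/s) powr r + (y/s) powr r" by simp
  then have "1 \<le> (x powr r + y powr r) / s powr r" using assms s by (simp add: powr_divide add_divide_distrib)
  then show ?thesis using s s_def by (simp add: field_simps)
qed

theorem lemmaA1:
  fixes M :: "'a measure" and X :: "'a \<Rightarrow> real" and \<theta> :: real
  assumes "prob_space M"
    and "X \<in> borel_measurable M"
    and "\<forall>\<omega>\<in>space M. 0 \<le> X \<omega>"
    and "0 < \<theta>" and "\<theta> \<le> 1"
    and "long_tailed_pow M (1 / \<theta>) X"
  shows "(\<forall>\<epsilon>::real. 0 < \<epsilon> \<longrightarrow>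
            filterlim (\<lambda>x::real. exp (\<epsilon> * x powr \<theta>) * measure M {\<omega>\<in>space M. X \<omega> > x})
              at_top at_top)
       \<and> (\<forall>\<eta>::real. 1 \<le> 1 / \<eta> \<and> 1 / \<eta> < 1 / \<theta> \<longrightarrow> long_tailed_pow M (1 / \<eta>) X)"
proof -
  interpret prob_space M by (rule assms(1))
  note Xm[measurable] = assms(2)
  define T where "T u = measure M {\<omega>\<in>space M. u < X \<omega> powr \<theta>}" for u
  have LT: "long_tailed M (\<lambda>\<omega>. X \<omega> powr \<theta>)" using assms(6) assms(4) by (simp add: long_tailed_pow_def)
  have Tpos: "\<And>u. 0 \<le> u \<Longrightarrow> T u > 0" using LT unfolding long_tailed_def T_def by auto
  have Tlim: "\<And>y. 0 < y \<Longrightarrow> ((\<lambda>u. T (u + y) / T u) \<longlongrightarrow> 1) at_top"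
    using LT unfolding long_tailed_def T_def by auto
  have Tmono: "T v \<le> T u" if "u \<le> v" for u v
    unfolding T_def using that by (intro finite_measure_mono) auto
  have set_eq: "{\<omega>\<in>space M. x < X \<omega>} = {\<omega>\<in>space M. x powr \<theta> < X \<omega> powr \<theta>}" if "x > 0" for x
  proof -
    have "x < X \<omega> \<longleftrightarrow> x powr \<theta> < X \<omega> powr \<theta>" if "\<omega> \<in> space M" for \<omega>
      using assms(3,4) that \<open>x > 0\<close>
      by (metis less_eq_real_def not_less powr_less_mono2 powr_mono2)
    then show ?thesis by auto
  qed
  have part1: "filterlim (\<lambda>x::real. exp (\<epsilon> * x powr \<theta>) * measure M {\<omega>\<in>space M. X \<omega> > x}) at_top at_top"
    if eps: "0 < \<epsilon>" for \<epsilon>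
  proof -
    have "exp (-\<epsilon>/2) < 1" using eps by simp
    then have "eventually (\<lambda>u. T (u + 1) / T u > exp (-\<epsilon>/2)) at_top"
      using Tlim[of 1] by (simp add: order_tendstoD(1))
    then obtain N0 where N0: "\<And>u. u \<ge> N0 \<Longrightarrow> T (u + 1) / T u > exp (-\<epsilon>/2)"
      by (auto simp: eventually_at_top_linorder)
    define N where "N = max N0 0"
    have N: "N \<ge> 0" "N \<ge> N0" by (auto simp: N_def)
    have step: "T (u + 1) \<ge> exp (-\<epsilon>/2) * T u" if "u \<ge> N" for u
      using N0[of u] Tpos[of u] that N by (simp add: field_simps)
    have ind: "T (N + real k) \<ge> T N * exp (-\<epsilon>/2 * real k)" for k :: nat
    proof (induction k)
      case 0 then show ?case by simp
    next
      case (Suc k)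
      have "T N * exp (-\<epsilon>/2 * real (Suc k)) = exp (-\<epsilon>/2) * (T N * exp (-\<epsilon>/2 * real k))"
        by (simp add: algebra_simps flip: exp_add)
      also have "\<dots> \<le> exp (-\<epsilon>/2) * T (N + real k)" using Suc by simp
      also have "\<dots> \<le> T (N + real k + 1)" using step[of "N + real k"] N by simp
      finally show ?case by (simp add: ac_simps)
    qed
    define c where "c = T N * exp (\<epsilon> * (N - 1) / 2)"
    have cpos: "c > 0" using Tpos[OF N(1)] by (simp add: c_def)
    have bound: "exp (\<epsilon> * u) * T u \<ge> c * exp (\<epsilon>/2 * u)" if "u \<ge> N" for u
    proof -
      define k where "k = nat \<lceil>u - N\<rceil>"
      have k1: "real k \<ge> u - N" and k2: "real k < u - N + 1" using that by (auto simp: k_def) (use ceiling_correct[of "u - N"] in linarith)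
      have "T u \<ge> T (N + real k)" using k1 by (intro Tmono) simp
      moreover have "exp (-\<epsilon>/2 * real k) \<ge> exp (-\<epsilon>/2 * (u - N + 1))" using k2 eps by simp
      ultimately have "T u \<ge> T N * exp (-\<epsilon>/2 * (u - N + 1))"
        using ind[of k] Tpos[OF N(1)]
        by (meson mult_left_mono less_imp_le order_trans)
      then have "exp (\<epsilon> * u) * T u \<ge> exp (\<epsilon> * u) * (T N * exp (-\<epsilon>/2 * (u - N + 1)))" by simp
      also have "exp (\<epsilon> * u) * (T N * exp (-\<epsilon>/2 * (u - N + 1))) = c * exp (\<epsilon>/2 * u)"
        unfolding c_def by (simp add: algebra_simps flip: exp_add) (simp add: field_simps)
      finally show ?thesis .
    qed
    have g: "filterlim (\<lambda>u. c * exp (\<epsilon>/2 * u)) at_top at_top"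
      using cpos eps by real_asymp
    have h: "filterlim (\<lambda>u. exp (\<epsilon> * u) * T u) at_top at_top"
      by (rule filterlim_at_top_mono[OF g]) (use bound in \<open>auto simp: eventually_at_top_linorder\<close>)
    have "filterlim (\<lambda>x. exp (\<epsilon> * x powr \<theta>) * T (x powr \<theta>)) at_top at_top"
      by (rule filterlim_compose[OF h real_powr_at_top[OF assms(4)]])
    moreover have "eventually (\<lambda>x. exp (\<epsilon> * x powr \<theta>) * T (x powr \<theta>) =
        exp (\<epsilon> * x powr \<theta>) * measure M {\<omega>\<in>space M. X \<omega> > x}) at_top"
      using eventually_gt_at_top[of 0] by eventually_elim (simp add: set_eq T_def)
    ultimately show ?thesis by (rule filterlim_cong[OF refl refl, THEN iffD1, rotated])
  qed
  have part2: "long_tailed_pow M (1 / \<eta>) X" if eta: "1 \<le> 1 / \<eta>" "1 / \<eta> < 1 / \<theta>" for \<eta>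
  proof -
    have e0: "\<eta> > 0" using eta(1) by (auto simp: le_divide_eq_1)
    have e1: "\<eta> \<le> 1" using eta(1) e0 by (simp add: field_simps)
    have te: "\<theta> < \<eta>" using eta(2) e0 assms(4) by (simp add: field_simps)
    define r where "r = \<theta> / \<eta>"
    have r0: "r > 0" and r1: "r \<le> 1" using e0 te assms(4) by (auto simp: r_def field_simps)
    have seq: "{\<omega>\<in>space M. x < X \<omega> powr \<eta>} = {\<omega>\<in>space M. x powr r < X \<omega> powr \<theta>}"
      if "x \<ge> 0" for x
    proof -
      have "x < X \<omega> powr \<eta> \<longleftrightarrow> x powr r < X \<omega> powr \<theta>" if "\<omega> \<in> space M" for \<omega>
      proof -
        have xx: "X \<omega> powr \<theta> = (X \<omega> powr \<eta>) powr r"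
          using e0 by (simp add: powr_powr r_def)
        have "0 \<le> X \<omega> powr \<eta>" by simp
        then show ?thesis unfolding xx using \<open>x \<ge> 0\<close> r0
          by (metis less_eq_real_def not_less powr_less_mono2 powr_mono2)
      qed
      then show ?thesis by auto
    qed
    have "long_tailed M (\<lambda>\<omega>. X \<omega> powr \<eta>)"
      unfolding long_tailed_def
    proof (intro conjI allI impI)
      show "\<forall>\<omega>\<in>space M. 0 \<le> X \<omega> powr \<eta>" by simp
      fix x :: real assume "0 \<le> x"
      then show "0 < measure M {\<omega> \<in> space M. x < X \<omega> powr \<eta>}"
        using Tpos[of "x powr r"] by (simp add: seq T_def)
    next
      fix y :: real assume y: "0 < y"
      have yr: "y powr r > 0" using y by simp
      have g: "((\<lambda>x. T (x powr r + y powr r) / T (x powr r)) \<longlongrightarrow> 1) at_top"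
        by (rule filterlim_compose[OF Tlim[OF yr] real_powr_at_top[OF r0]])
      have "((\<lambda>x. T ((x + y) powr r) / T (x powr r)) \<longlongrightarrow> 1) at_top"
      proof (rule tendsto_sandwich[OF _ _ g tendsto_const])
        show "eventually (\<lambda>x. T (x powr r + y powr r) / T (x powr r) \<le> T ((x + y) powr r) / T (x powr r)) at_top"
          using eventually_ge_at_top[of 0]
        proof eventually_elim
          case (elim x)
          have "T (x powr r + y powr r) \<le> T ((x + y) powr r)"
            using powr_subadd[of x y r] elim y r0 r1 by (intro Tmono) auto
          then show ?case using Tpos[of "x powr r"] by (simp add: divide_right_mono)
        qed
        show "eventually (\<lambda>x. T ((x + y) powr r) / T (x powr r) \<le> 1) at_top"
          using eventually_ge_at_top[of 0]
        proof eventually_elim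
          case (elim x)
          have "T ((x + y) powr r) \<le> T (x powr r)"
            using elim y r0 by (intro Tmono powr_mono2) auto
          then show ?case using Tpos[of "x powr r"] by simp
        qed
      qed
      moreover have "eventually (\<lambda>x. T ((x + y) powr r) / T (x powr r) =
          measure M {\<omega> \<in> space M. x + y < X \<omega> powr \<eta>} / measure M {\<omega> \<in> space M. x < X \<omega> powr \<eta>}) at_top"
        using eventually_ge_at_top[of 0]
        by eventually_elim (use y in \<open>simp add: seq T_def\<close>)
      ultimately show "((\<lambda>x. measure M {\<omega> \<in> space M. x + y < X \<omega> powr \<eta>} / measure M {\<omega> \<in> space M. x < X \<omega> powr \<eta>}) \<longlongrightarrow> 1) at_top"
        by (rule filterlim_cong[OF refl refl, THEN iffD1, rotated])
    qed
    then show ?thesis using assms(3) e0 by (simp add: long_tailed_pow_def)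
  qed
  show ?thesis using part1 part2 by blast
qed
end
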